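(* Let $\mathbf u$ be an aperiodic infinite word over a finite alphabet whose language is closed under reversal, and let $N$ be an integer such that $T_{\mathbf u}(n)=0$ for all $n\ge N$. Then for every factor $w$ of $\mathbf u$ with $|w|\ge N$, the occurrences of $w$ and of $\overline w$ in $\mathbf u$ alternate: if $w\neq\overline w$, then between any two occurrences of $w$ in $\mathbf u$ there is an occurrence of $\overline w$, and between any two occurrences of $\overline w$ there is an occurrence of $w$.
   Context: An infinite word is aperiodic if it is not eventually periodic. For a finite word $w=w_0\cdots w_{n-1}$ its reversal is $\overline{w}=w_{n-1}\cdots w_0$; $w$ is a palindrome if $w=\overline{w}$. An occurrence of $w$ in $\mathbf u=u_0u_1\cdots$ is an index $i$ with $u_i\cdots u_{i+|w|-1}=w$. $\mathcal L_n(\mathbf u)$ is the set of factors of $\mathbf u$ of length $n$; the language is closed under reversal if every factor's reversal is a factor. $\mathcal C_{\mathbf u}(n)=\#\mathcal L_n(\mathbf u)$, $\mathcal P_{\mathbf u}(n)$ is the number of palindromes in $\mathcal L_n(\mathbf u)$, and $T_{\mathbf u}(n)=\mathcal C_{\mathbf u}(n+1)-\mathcal C_{\mathbf u}(n)+2-\mathcal P_{\mathbf u}(n+1)-\mathcal P_{\mathbf u}(n)$. *)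

theory Defs
  imports Main
begin

definition eventually_periodic :: "(nat \<Rightarrow> 'a) \<Rightarrow> bool" where
  "eventually_periodic u \<longleftrightarrow> (\<exists>p>0. \<exists>n0. \<forall>i\<ge>n0. u (i + p) = u i)"

definition aperiodic :: "(nat \<Rightarrow> 'a) \<Rightarrow> bool" where
  "aperiodic u \<longleftrightarrow> \<not> eventually_periodic u"

definition occurs_at :: "(nat \<Rightarrow> 'a) \<Rightarrow> 'a list \<Rightarrow> nat \<Rightarrow> bool" where
  "occurs_at u w i \<longleftrightarrow> map u [i..<i + length w] = w"

definition factor :: "'a list \<Rightarrow> (nat \<Rightarrow> 'a) \<Rightarrow> bool" where
  "factor w u \<longleftrightarrow> (\<exists>i. occurs_at u w i)"

definition factors_len :: "(nat \<Rightarrow> 'a) \<Rightarrow> nat \<Rightarrow> 'a list set" where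
  "factors_len u n = {w. length w = n \<and> factor w u}"

definition palindrome :: "'a list \<Rightarrow> bool" where
  "palindrome w \<longleftrightarrow> rev w = w"

definition closed_under_reversal :: "(nat \<Rightarrow> 'a) \<Rightarrow> bool" where
  "closed_under_reversal u \<longleftrightarrow> (\<forall>w. factor w u \<longrightarrow> factor (rev w) u)"

definition complexity :: "(nat \<Rightarrow> 'a) \<Rightarrow> nat \<Rightarrow> nat" where
  "complexity u n = card (factors_len u n)"

definition pal_complexity :: "(nat \<Rightarrow> 'a) \<Rightarrow> nat \<Rightarrow> nat" where
  "pal_complexity u n = card {w \<in> factors_len u n. palindrome w}"

definition T_fun :: "(nat \<Rightarrow> 'a) \<Rightarrow> nat \<Rightarrow> int" where
  "T_fun u n = int (complexity u (n + 1)) - int (complexity u n) + 2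
               - int (pal_complexity u (n + 1)) - int (pal_complexity u n)"

end

theory Submission
  imports Defs
begin

definition sub :: "(nat \<Rightarrow> 'a) \<Rightarrow> nat \<Rightarrow> nat \<Rightarrow> 'a list" where
  "sub u i n = map u [i..<i+n]"

lemma length_sub[simp]: "length (sub u i n) = n"
  by (simp add: sub_def)

lemma take_sub: "take n (sub u i (Suc n)) = sub u i n"
  by (simp add: sub_def take_map)

lemma drop_sub: "drop 1 (sub u i (Suc n)) = sub u (Suc i) n"
  by (simp add: sub_def drop_map)

lemma occurs_at_iff: "occurs_at u w i \<longleftrightarrow> sub u i (length w) = w"
  by (simp add: occurs_at_def sub_def)

lemma sub_in_L: "sub u i n \<in> factors_len u n"
  by (auto simp: factors_len_def factor_def occurs_at_iff)

lemma L_elem: "x \<in> factors_len u n \<Longrightarrow> length x = n \<and> (\<exists>i. sub u i n = x)"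
  by (auto simp: factors_len_def factor_def occurs_at_iff)

lemma finite_L: assumes "finite (range u)" shows "finite (factors_len u n)"
proof -
  have "factors_len u n \<subseteq> {xs. set xs \<subseteq> range u \<and> length xs = n}"
  proof
    fix x assume "x \<in> factors_len u n"
    then obtain i where "map u [i..<i+n] = x" "length x = n"
      by (auto simp: factors_len_def factor_def occurs_at_def)
    then show "x \<in> {xs. set xs \<subseteq> range u \<and> length xs = n}" by auto
  qed
  moreover have "finite {xs. set xs \<subseteq> range u \<and> length xs = n}"
    using finite_lists_length_eq[OF assms] by simp
  ultimately show ?thesis by (rule finite_subset)
qed

definition cls :: "'a list \<Rightarrow> 'a list set" where "cls x = {x, rev x}"

lemma cls_rev[simp]: "cls (rev x) = cls x" by (auto simp: cls_def)

lemma cls_eq: "cls a = cls b \<Longrightarrow> a = b \<or> a = rev b"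
  by (auto simp: cls_def doubleton_eq_iff)

lemma card_cls_image:
  assumes "finite A" "\<forall>x\<in>A. rev x \<in> A"
  shows "2 * card (cls ` A) = card A + card {x\<in>A. palindrome x}"
  using assms
proof (induct "card A" arbitrary: A rule: less_induct)
  case less
  show ?case
  proof (cases "A = {}")
    case True then show ?thesis by simp
  next
    case False
    then obtain x where x: "x \<in> A" by blast
    define A' where "A' = A - {x, rev x}"
    have rx: "rev x \<in> A" using less x by auto
    have sub: "{x, rev x} \<subseteq> A" using x rx by auto
    have fA': "finite A'" using less by (simp add: A'_def)
    have cA: "card A = card A' + card {x, rev x}"
      unfolding A'_def using card_Diff_subset[OF _ sub] card_mono[OF less(2) sub] less(2)
      by (simp add: finite_subset[OF sub])
    have lt: "card A' < card A" using cA by (simp add: card_gt_0_iff)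
    have clA': "\<forall>y\<in>A'. rev y \<in> A'" using less(3) by (auto simp: A'_def)
    have IH: "2 * card (cls ` A') = card A' + card {x\<in>A'. palindrome x}"
      using less(1)[OF lt fA' clA'] .
    have Aeq: "A = insert x (insert (rev x) A')" using sub unfolding A'_def by blast
    have img: "cls ` A = insert (cls x) (cls ` A')"
      by (subst Aeq) simp
    have notin: "cls x \<notin> cls ` A'"
    proof
      assume "cls x \<in> cls ` A'"
      then obtain y where y: "y \<in> A'" "cls x = cls y" by blast
      from cls_eq[OF y(2)] have "y = x \<or> y = rev x" by auto
      with y(1) show False by (simp add: A'_def)
    qed
    have cimg: "card (cls ` A) = Suc (card (cls ` A'))"
      unfolding img using notin fA' by simp
    have palsplit: "{y\<in>A. palindrome y} = {y\<in>A'. palindrome y} \<union> {y\<in>{x, rev x}. palindrome y}"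
      using Aeq by blast
    have disj: "{y\<in>A'. palindrome y} \<inter> {y\<in>{x, rev x}. palindrome y} = {}"
      unfolding A'_def by blast
    have cpal: "card {y\<in>A. palindrome y} = card {y\<in>A'. palindrome y} + card {y\<in>{x, rev x}. palindrome y}"
      unfolding palsplit by (rule card_Un_disjoint) (use fA' disj in auto)
    show ?thesis
    proof (cases "palindrome x")
      case True
      then have "rev x = x" by (simp add: palindrome_def)
      then have "{y\<in>{x, rev x}. palindrome y} = {x}" "{x, rev x} = {x}" using True by auto
      then show ?thesis using cA cpal cimg IH by simp
    next
      case False
      then have "rev x \<noteq> x" "\<not> palindrome (rev x)" by (auto simp: palindrome_def)
      then have "{y\<in>{x, rev x}. palindrome y} = {}" "card {x, rev x} = 2" using False by auto
      then show ?thesis using cA cpal cimg IH by simp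
    qed
  qed
qed

lemma tree_count:
  fixes ends :: "'e \<Rightarrow> 'v set"
  assumes fin: "finite E"
    and R: "R = {(x,y). \<exists>c\<in>E. ends c = {x,y}}"
    and conn: "\<forall>v\<in>V. (r, v) \<in> R\<^sup>*"
  shows "card (V - {r}) \<le> card E"
proof -
  define d where "d v = (LEAST n. (r, v) \<in> R ^^ n)" for v
  have dprop: "(r, v) \<in> R ^^ d v" if "(r, v) \<in> R\<^sup>*" for v
    using that unfolding d_def by (metis LeastI rtrancl_power)
  have dle: "d v \<le> n" if "(r, v) \<in> R ^^ n" for v n
    using that unfolding d_def by (rule Least_le)
  have pred: "\<exists>c\<in>E. \<exists>y. ends c = {y, v} \<and> d v = Suc (d y)" if "v \<in> V - {r}" for v
  proof -
    have "(r, v) \<in> R ^^ d v" using dprop conn that by auto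
    moreover have "d v \<noteq> 0" using calculation that by (cases "d v") auto
    ultimately obtain k where k: "d v = Suc k" "(r, v) \<in> R ^^ Suc k" by (metis not0_implies_Suc)
    then obtain y where y: "(r, y) \<in> R ^^ k" "(y, v) \<in> R" by auto
    have "d y \<le> k" using dle y(1) .
    moreover have "(r, v) \<in> R ^^ Suc (d y)"
      using dprop[of y] y relpow_Suc_I by (metis relpow_imp_rtrancl)
    then have "d v \<le> Suc (d y)" by (rule dle)
    ultimately have "d v = Suc (d y)" using k by simp
    with y(2) R show ?thesis by auto
  qed
  define f where "f v = (SOME c. c \<in> E \<and> (\<exists>y. ends c = {y, v} \<and> d v = Suc (d y)))" for v
  have fprop: "f v \<in> E \<and> (\<exists>y. ends (f v) = {y, v} \<and> d v = Suc (d y))" if "v \<in> V - {r}" for v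
  proof -
    have "\<exists>c. c \<in> E \<and> (\<exists>y. ends c = {y, v} \<and> d v = Suc (d y))" using pred[OF that] by blast
    then show ?thesis unfolding f_def by (rule someI_ex)
  qed
  have "inj_on f (V - {r})"
  proof (rule inj_onI)
    fix v v' assume v: "v \<in> V - {r}" and v': "v' \<in> V - {r}" and eq: "f v = f v'"
    obtain y where y: "ends (f v) = {y, v}" "d v = Suc (d y)" using fprop[OF v] by blast
    obtain y' where y': "ends (f v') = {y', v'}" "d v' = Suc (d y')" using fprop[OF v'] by blast
    show "v = v'"
    proof (rule ccontr)
      assume "v \<noteq> v'"
      with y y' eq have "v = y'" "v' = y" by (auto simp: doubleton_eq_iff)
      with y y' show False by simp
    qed
  qed
  moreover have "f ` (V - {r}) \<subseteq> E" using fprop by auto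
  ultimately show ?thesis using card_inj_on_le fin by blast
qed


definition ends :: "nat \<Rightarrow> 'a list set \<Rightarrow> 'a list set set" where
  "ends m c = (\<Union>e\<in>c. {cls (take m e), cls (drop 1 e)})"

definition Rel :: "nat \<Rightarrow> 'a list set set \<Rightarrow> ('a list set \<times> 'a list set) set" where
  "Rel m E = {(x,y). \<exists>c\<in>E. ends m c = {x,y}}"

lemma ends_cls: "length e = Suc m \<Longrightarrow> ends m (cls e) = {cls (take m e), cls (drop 1 e)}"
  by (auto simp: ends_def cls_def take_rev drop_rev)

lemma pal_step: "palindrome e \<Longrightarrow> length e = Suc m \<Longrightarrow> drop 1 e = rev (take m e)"
  by (metis diff_Suc_1 drop_rev palindrome_def)

lemma sym_Rel: "sym (Rel m E)"
  by (auto simp: sym_def Rel_def insert_commute)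

lemma walk:
  assumes "a \<le> b"
  shows "(\<forall>t. a \<le> t \<and> t < b \<longrightarrow> palindrome (sub u t (Suc m)) \<or> cls (sub u t (Suc m)) \<in> E)
     \<longrightarrow> (cls (sub u a m), cls (sub u b m)) \<in> (Rel m E)\<^sup>*"
  using assms
proof (induct b rule: dec_induct)
  case base
  then show ?case by simp
next
  case (step n)
  show ?case
  proof
    assume H: "\<forall>t. a \<le> t \<and> t < Suc n \<longrightarrow> palindrome (sub u t (Suc m)) \<or> cls (sub u t (Suc m)) \<in> E"
    have "\<forall>t. a \<le> t \<and> t < n \<longrightarrow> palindrome (sub u t (Suc m)) \<or> cls (sub u t (Suc m)) \<in> E"
      using H by simp
    then have IH: "(cls (sub u a m), cls (sub u n m)) \<in> (Rel m E)\<^sup>*" using step(3) by blast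
    define e where "e = sub u n (Suc m)"
    have te: "take m e = sub u n m" and de: "drop 1 e = sub u (Suc n) m"
      unfolding e_def by (rule take_sub, rule drop_sub)
    have "a \<le> n \<and> n < Suc n" using step(1) by simp
    then have "palindrome e \<or> cls e \<in> E" using H unfolding e_def by blast
    then show "(cls (sub u a m), cls (sub u (Suc n) m)) \<in> (Rel m E)\<^sup>*"
    proof
      assume "palindrome e"
      then have "sub u (Suc n) m = rev (sub u n m)" using pal_step[of e m] te de by (simp add: e_def)
      then show ?thesis using IH by simp
    next
      assume "cls e \<in> E"
      have le: "length e = Suc m" by (simp add: e_def)
      have "ends m (cls e) = {cls (sub u n m), cls (sub u (Suc n) m)}"
        using ends_cls[OF le] unfolding te de .
      then have "(cls (sub u n m), cls (sub u (Suc n) m)) \<in> Rel m E"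
        unfolding Rel_def using \<open>cls e \<in> E\<close> by blast
      then show ?thesis by (rule rtrancl_into_rtrancl[OF IH])
    qed
  qed
qed

lemma no_return:
  assumes fin: "finite (range u)" and cl: "closed_under_reversal u"
    and T0: "T_fun u m = 0"
    and w: "length w = m" "w \<noteq> rev w"
    and i: "sub u i m = w" and k: "sub u k m = w" and ik: "i < k"
    and between: "\<forall>t. i < t \<and> t < k \<longrightarrow> sub u t m \<noteq> w \<and> sub u t m \<noteq> rev w"
  shows False
proof -
  define L where "L n = factors_len u n" for n
  have clL: "\<forall>x\<in>L n. rev x \<in> L n" for n
    using cl by (auto simp: L_def factors_len_def closed_under_reversal_def)
  have finL: "finite (L n)" for n using finite_L[OF fin] by (simp add: L_def)
  define VQ where "VQ = cls ` L m"
  define NP where "NP = {e \<in> L (Suc m). \<not> palindrome e}"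
  define EQ where "EQ = cls ` NP"
  have finNP: "finite NP" using finL by (simp add: NP_def)
  have clNP: "\<forall>x\<in>NP. rev x \<in> NP" using clL by (auto simp: NP_def palindrome_def)
  have cV: "2 * card VQ = card (L m) + card {x\<in>L m. palindrome x}"
    unfolding VQ_def by (rule card_cls_image[OF finL clL])
  have cE0: "2 * card EQ = card NP + card {x\<in>NP. palindrome x}"
    unfolding EQ_def by (rule card_cls_image[OF finNP clNP])
  have pe: "{x\<in>NP. palindrome x} = {}" by (auto simp: NP_def)
  have cE: "2 * card EQ = card NP" using cE0 unfolding pe by simp
  have split: "L (Suc m) = NP \<union> {x\<in>L (Suc m). palindrome x}" by (auto simp: NP_def)
  have cL1: "card (L (Suc m)) = card NP + card {x\<in>L (Suc m). palindrome x}"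
    by (subst split, rule card_Un_disjoint) (use finL finNP in \<open>auto simp: NP_def\<close>)
  have T: "int (card (L (Suc m))) - int (card (L m)) + 2 - int (card {x\<in>L (Suc m). palindrome x})
      - int (card {x\<in>L m. palindrome x}) = 0"
    using T0 by (simp add: T_fun_def complexity_def pal_complexity_def L_def)
  have cnt: "card EQ + 1 = card VQ" using T cV cE cL1 by linarith
  define r where "r = cls w"
  define ei where "ei = sub u i (Suc m)"
  have take_ei: "take m ei = w" unfolding ei_def using i by (simp add: take_sub)
  have drop_ei: "drop 1 ei = sub u (Suc i) m" unfolding ei_def by (rule drop_sub)
  have lei: "length ei = Suc m" by (simp add: ei_def)
  have npi: "\<not> palindrome ei"
  proof
    assume "palindrome ei"
    then have "sub u (Suc i) m = rev w" using pal_step[OF _ lei] take_ei drop_ei by simp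
    then show False using between w(2) k ik
      by (metis Suc_lessI lessI)
  qed
  have epsE: "cls ei \<in> EQ" unfolding EQ_def NP_def L_def using npi by (auto simp: ei_def sub_in_L)
  define E' where "E' = EQ - {cls ei}"
  have walk1: "(cls (sub u (Suc i) m), cls (sub u k m)) \<in> (Rel m E')\<^sup>*"
  proof (rule walk[rule_format])
    show "Suc i \<le> k" using ik by simp
    fix t assume t: "Suc i \<le> t \<and> t < k"
    define e where "e = sub u t (Suc m)"
    show "palindrome (sub u t (Suc m)) \<or> cls (sub u t (Suc m)) \<in> E'"
    proof (cases "palindrome e")
      case True then show ?thesis by (simp add: e_def)
    next
      case False
      then have "cls e \<in> EQ" unfolding EQ_def NP_def L_def by (auto simp: e_def sub_in_L)
      moreover have "cls e \<noteq> cls ei"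
      proof
        assume "cls e = cls ei"
        then have "e = ei \<or> e = rev ei" by (rule cls_eq)
        then show False
        proof
          assume "e = ei"
          then have "sub u t m = w" using take_ei take_sub[of m u t] by (simp add: e_def)
          then show False using between t by auto
        next
          assume "e = rev ei"
          then have "drop 1 e = rev (take m ei)" using lei by (simp add: drop_rev)
          then have "sub u (Suc t) m = rev w" using take_ei drop_sub[of u t m] by (simp add: e_def)
          show False
          proof (cases "Suc t = k")
            case True then show False using \<open>sub u (Suc t) m = rev w\<close> w(2) k by simp
          next
            case False then have "Suc t < k" using t by simp
            then show False using between t \<open>sub u (Suc t) m = rev w\<close> by auto
          qed
        qed
      qed
      ultimately show ?thesis by (simp add: E'_def e_def)
    qed
  qed
  define x where "x = cls (sub u (Suc i) m)"
  have endse: "ends m (cls ei) = {r, x}" using ends_cls[OF lei] take_ei drop_ei by (simp add: r_def x_def)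
  have xr: "(x, r) \<in> (Rel m E')\<^sup>*" using walk1 k by (simp add: x_def r_def)
  have rx: "(r, x) \<in> (Rel m E')\<^sup>*" using xr sym_rtrancl[OF sym_Rel] by (metis symD)
  have incl: "Rel m EQ \<subseteq> (Rel m E')\<^sup>*"
  proof
    fix p assume "p \<in> Rel m EQ"
    then obtain a b c where p: "p = (a, b)" "c \<in> EQ" "ends m c = {a, b}" by (auto simp: Rel_def)
    show "p \<in> (Rel m E')\<^sup>*"
    proof (cases "c = cls ei")
      case True
      then have "a \<in> {r, x}" "b \<in> {r, x}" using p endse by auto
      then show ?thesis using p xr rx by auto
    next
      case False
      then have "c \<in> E'" using p by (simp add: E'_def)
      then show ?thesis using p by (auto simp: Rel_def)
    qed
  qed
  then have incl2: "(Rel m EQ)\<^sup>* \<subseteq> (Rel m E')\<^sup>*" by (rule rtrancl_subset_rtrancl)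
  have connEQ: "\<forall>v\<in>VQ. (r, v) \<in> (Rel m EQ)\<^sup>*"
  proof
    fix v assume "v \<in> VQ"
    then obtain y where y: "y \<in> L m" "v = cls y" by (auto simp: VQ_def)
    then obtain p where p: "sub u p m = y" using L_elem[of y u m] by (auto simp: L_def)
    have allE: "\<forall>t. a \<le> t \<and> t < b \<longrightarrow> palindrome (sub u t (Suc m)) \<or> cls (sub u t (Suc m)) \<in> EQ" for a b
      by (auto simp: EQ_def NP_def L_def sub_in_L)
    show "(r, v) \<in> (Rel m EQ)\<^sup>*"
    proof (cases "i \<le> p")
      case True
      then show ?thesis using walk[OF True, of u m EQ] allE i p y by (simp add: r_def)
    next
      case False
      then have "p \<le> i" by simp
      then have "(v, r) \<in> (Rel m EQ)\<^sup>*" using walk[of p i u m EQ] allE i p y by (simp add: r_def)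
      then show ?thesis using sym_rtrancl[OF sym_Rel] by (metis symD)
    qed
  qed
  have finEQ: "finite EQ" using finNP by (simp add: EQ_def)
  have finE': "finite E'" using finEQ by (simp add: E'_def)
  have c1: "card (VQ - {r}) \<le> card E'"
  proof (rule tree_count[where E=E' and R="Rel m E'" and ends="ends m" and V=VQ and r=r])
    show "finite E'" by (rule finE')
    show "Rel m E' = {(x, y). \<exists>c\<in>E'. ends m c = {x, y}}" by (simp add: Rel_def)
    show "\<forall>v\<in>VQ. (r, v) \<in> (Rel m E')\<^sup>*" using connEQ incl2 by blast
  qed
  have c2: "card E' = card EQ - 1" using epsE finEQ by (simp add: E'_def)
  have rV: "r \<in> VQ" unfolding VQ_def L_def r_def using sub_in_L[of u i m] i by (metis image_eqI)
  have c3: "card (VQ - {r}) = card VQ - 1" using rV by (rule card_Diff_singleton)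
  have c4: "card EQ > 0" using epsE finEQ card_gt_0_iff by blast
  show False using c1 c2 c3 c4 cnt by linarith
qed


lemma alternate:
  assumes fin: "finite (range u)" and cl: "closed_under_reversal u"
    and T0: "T_fun u m = 0"
    and w: "length w = m" "w \<noteq> rev w"
    and i: "sub u i m = w" and j: "sub u j m = w" and ij: "i < j"
  shows "\<exists>k. i < k \<and> k < j \<and> sub u k m = rev w"
proof (rule ccontr)
  assume H: "\<not> (\<exists>k. i < k \<and> k < j \<and> sub u k m = rev w)"
  define k where "k = (LEAST k. i < k \<and> sub u k m = w)"
  have kk: "i < k \<and> sub u k m = w" unfolding k_def by (rule LeastI[of _ j]) (use ij j in simp)
  have kj: "k \<le> j" unfolding k_def by (rule Least_le) (use ij j in simp)
  have between: "\<forall>t. i < t \<and> t < k \<longrightarrow> sub u t m \<noteq> w \<and> sub u t m \<noteq> rev w"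
  proof (intro allI impI conjI)
    fix t assume t: "i < t \<and> t < k"
    show "sub u t m \<noteq> w"
    proof
      assume "sub u t m = w"
      then have "k \<le> t" unfolding k_def using t by (intro Least_le) simp
      then show False using t by simp
    qed
    show "sub u t m \<noteq> rev w" using H t kj by auto
  qed
  show False using no_return[OF fin cl T0 w i] kk between by blast
qed

theorem corollary13:
  fixes u :: "nat \<Rightarrow> 'a" and N :: int
  assumes "finite (range u)"
    and "aperiodic u"
    and "closed_under_reversal u"
    and "\<forall>n::nat. int n \<ge> N \<longrightarrow> T_fun u n = 0"
  shows "\<forall>w. factor w u \<and> int (length w) \<ge> N \<and> w \<noteq> rev w \<longrightarrow>
           (\<forall>i j. occurs_at u w i \<and> occurs_at u w j \<and> i < j \<longrightarrow>
              (\<exists>k. i < k \<and> k < j \<and> occurs_at u (rev w) k)) \<and>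
           (\<forall>i j. occurs_at u (rev w) i \<and> occurs_at u (rev w) j \<and> i < j \<longrightarrow>
              (\<exists>k. i < k \<and> k < j \<and> occurs_at u w k))"
proof (intro allI impI conjI)
  fix w assume hw: "factor w u \<and> int (length w) \<ge> N \<and> w \<noteq> rev w"
  have T0: "T_fun u (length w) = 0" using assms(4) hw by blast
  have ne: "w \<noteq> rev w" "rev w \<noteq> rev (rev w)" using hw by auto
  {
    fix i j assume "occurs_at u w i \<and> occurs_at u w j \<and> i < j"
    then have "sub u i (length w) = w" "sub u j (length w) = w" "i < j" by (auto simp: occurs_at_iff)
    from alternate[OF assms(1,3) T0 refl ne(1) this] show "\<exists>k. i < k \<and> k < j \<and> occurs_at u (rev w) k"
      by (auto simp: occurs_at_iff)
  }
  {
    fix i j assume "occurs_at u (rev w) i \<and> occurs_at u (rev w) j \<and> i < j"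
    then have "sub u i (length w) = rev w" "sub u j (length w) = rev w" "i < j" by (auto simp: occurs_at_iff)
    from alternate[OF assms(1,3) T0 _ ne(2) this] show "\<exists>k. i < k \<and> k < j \<and> occurs_at u w k"
      by (auto simp: occurs_at_iff)
  }
qed

end
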